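(* Let $\mathbf{a}\in\mathbb{C}^N$, $h_{aw}\in\mathbb{C}$, $\sigma_w^2>0$, $\epsilon>0$ and $L>0$, and let $$\mathbf{A}=\begin{bmatrix}\mathbf{a}\mathbf{a}^H & \mathbf{a}h_{aw}^*\\ h_{aw}\mathbf{a}^H & |h_{aw}|^2\end{bmatrix}\in\mathbb{C}^{(N+1)\times(N+1)}.$$ For Hermitian positive semidefinite $\mathbf{W}\in\mathbb{C}^{(N+1)\times(N+1)}$, the constraint $$\ln\!\left(1+\frac{\mathrm{Tr}(\mathbf{A}\mathbf{W})}{\sigma_w^2}\right)-\frac{\mathrm{Tr}(\mathbf{A}\mathbf{W})}{\mathrm{Tr}(\mathbf{A}\mathbf{W})+\sigma_w^2}\le \frac{2\epsilon^2}{L}$$ is equivalent to $$\left(1+\frac{\mathrm{Tr}(\mathbf{A}\mathbf{W})}{\sigma_w^2}\right)\ln\!\left(1+\frac{\mathrm{Tr}(\mathbf{A}\mathbf{W})}{\sigma_w^2}\right)-\left(1+\frac{2\epsilon^2}{L}\right)\frac{\mathrm{Tr}(\mathbf{A}\mathbf{W})}{\sigma_w^2}\le\frac{2\epsilon^2}{L},$$ and the latter is a convex constraint with respect to $\mathbf{W}$ (on the cone of Hermitian positive semidefinite matrices).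
   Context: The first inequality is the covertness constraint $\mathcal{D}(\mathbb{P}_0|\mathbb{P}_1)\le 2\epsilon^2$ (Kullback–Leibler divergence over $L$ channel uses) after the lifting $\mathbf{W}=\mathbf{w}\mathbf{w}^H$ of a scaled reflection vector; $\mathrm{Tr}$ denotes the trace. *)

theory Defs
  imports "HOL-Analysis.Analysis"
begin

definition conj_transpose :: "complex^'m^'m \<Rightarrow> complex^'m^'m" where
  "conj_transpose W = (\<chi> i j. cnj (W $ j $ i))"

definition hermitian :: "complex^'m^'m \<Rightarrow> bool" where
  "hermitian W \<longleftrightarrow> conj_transpose W = W"

definition hermitian_psd :: "complex^'m^'m \<Rightarrow> bool" where
  "hermitian_psd W \<longleftrightarrow> hermitian W \<and>
     (\<forall>x::complex^'m. 0 \<le> (\<Sum>i\<in>UNIV. \<Sum>j\<in>UNIV. cnj (x $ i) * W $ i $ j * x $ j))"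

text \<open>The (N+1)x(N+1) block matrix A, indexed by 'n + unit (Inr () is the last index).\<close>
definition blockA :: "complex^'n \<Rightarrow> complex \<Rightarrow> complex^('n + unit)^('n + unit)" where
  "blockA a h = (\<chi> i j. (case (i, j) of
       (Inl k, Inl l) \<Rightarrow> a $ k * cnj (a $ l)
     | (Inl k, Inr _) \<Rightarrow> a $ k * cnj h
     | (Inr _, Inl l) \<Rightarrow> h * cnj (a $ l)
     | (Inr _, Inr _) \<Rightarrow> complex_of_real ((cmod h)^2)))"

end

theory Submission imports Defs begin
lemma tlin: "Re (trace (A ** (u *\<^sub>R X + v *\<^sub>R Y))) = u * Re (trace ((A::complex^'m^'m) ** X)) + v * Re (trace (A ** Y))"
  by (simp add: trace_def matrix_matrix_mult_def sum.distrib sum_distrib_left algebra_simps)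

lemma psd_convex: "convex {W::complex^'m^'m. hermitian_psd W}"
proof (rule convexI)
  fix X Y :: "complex^'m^'m" and u v :: real
  assume X: "X \<in> {W. hermitian_psd W}" and Y: "Y \<in> {W. hermitian_psd W}" and uv: "0 \<le> u" "0 \<le> v" "u + v = 1"
  have hX: "hermitian X" "\<forall>x. 0 \<le> (\<Sum>i\<in>UNIV. \<Sum>j\<in>UNIV. cnj (x $ i) * X $ i $ j * x $ j)" using X by (auto simp: hermitian_psd_def)
  have hY: "hermitian Y" "\<forall>x. 0 \<le> (\<Sum>i\<in>UNIV. \<Sum>j\<in>UNIV. cnj (x $ i) * Y $ i $ j * x $ j)" using Y by (auto simp: hermitian_psd_def)
  have "hermitian (u *\<^sub>R X + v *\<^sub>R Y)"
  proof -
    have cX: "cnj (X $ j $ i) = X $ i $ j" for i j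
      using hX(1) unfolding hermitian_def conj_transpose_def by (metis vec_lambda_beta)
    have cY: "cnj (Y $ j $ i) = Y $ i $ j" for i j
      using hY(1) unfolding hermitian_def conj_transpose_def by (metis vec_lambda_beta)
    show ?thesis unfolding hermitian_def conj_transpose_def
      by (simp add: vec_eq_iff cX cY)
  qed
  moreover have "0 \<le> (\<Sum>i\<in>UNIV. \<Sum>j\<in>UNIV. cnj (x $ i) * (u *\<^sub>R X + v *\<^sub>R Y) $ i $ j * x $ j)" for x
  proof -
    have e: "(\<Sum>i\<in>UNIV. \<Sum>j\<in>UNIV. cnj (x $ i) * (u *\<^sub>R X + v *\<^sub>R Y) $ i $ j * x $ j)
      = of_real u * (\<Sum>i\<in>UNIV. \<Sum>j\<in>UNIV. cnj (x $ i) * X $ i $ j * x $ j) + of_real v * (\<Sum>i\<in>UNIV. \<Sum>j\<in>UNIV. cnj (x $ i) * Y $ i $ j * x $ j)"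
    proof -
      have comp: "(u *\<^sub>R X + v *\<^sub>R Y) $ i $ j = of_real u * X $ i $ j + of_real v * Y $ i $ j" for i j
        by (simp add: complex_eq_iff)
      show ?thesis by (simp only: comp) (simp add: sum.distrib sum_distrib_left algebra_simps)
    qed
    show ?thesis unfolding e using hX(2) hY(2) uv
      by (intro add_nonneg_nonneg mult_nonneg_nonneg) (auto simp: less_eq_complex_def)
  qed
  ultimately show "u *\<^sub>R X + v *\<^sub>R Y \<in> {W. hermitian_psd W}" by (simp add: hermitian_psd_def)
qed

lemma t_nonneg:
  assumes "hermitian_psd W"
  shows "0 \<le> Re (trace (blockA (a::complex^'n) h ** W))"
proof -
  define v :: "complex^('n + unit)" where "v = (\<chi> i. case i of Inl k \<Rightarrow> a $ k | Inr _ \<Rightarrow> h)"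
  have A: "blockA a h $ i $ j = v $ i * cnj (v $ j)" for i j
    unfolding blockA_def v_def
    apply (cases i; cases j)
       apply auto
    by (metis complex_norm_square of_real_power)
  have "trace (blockA a h ** W) = (\<Sum>i\<in>UNIV. \<Sum>j\<in>UNIV. v $ i * cnj (v $ j) * W $ j $ i)"
    by (simp add: trace_def matrix_matrix_mult_def A)
  also have "\<dots> = (\<Sum>j\<in>UNIV. \<Sum>i\<in>UNIV. cnj (v $ j) * W $ j $ i * v $ i)"
    by (subst sum.swap) (simp add: algebra_simps)
  finally have "trace (blockA a h ** W) = (\<Sum>j\<in>UNIV. \<Sum>i\<in>UNIV. cnj (v $ j) * W $ j $ i * v $ i)" .
  moreover have "0 \<le> (\<Sum>j\<in>UNIV. \<Sum>i\<in>UNIV. cnj (v $ j) * W $ j $ i * v $ i)"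
    using assms by (auto simp: hermitian_psd_def)
  ultimately show ?thesis by (simp add: less_eq_complex_def)
qed

lemma gconv:
  fixes c :: real
  shows "convex_on {0..} (\<lambda>x. (1 + x) * ln (1 + x) - (1 + c) * x)"
proof (rule convex_on_realI[where f' = "\<lambda>x. ln (1 + x) - c"])
  show "connected {0::real..}" by simp
next
  fix x :: real assume "x \<in> {0..}"
  then show "((\<lambda>x. (1 + x) * ln (1 + x) - (1 + c) * x) has_real_derivative ln (1 + x) - c) (at x)"
    by (auto intro!: derivative_eq_intros simp: field_simps)
next
  fix x y :: real assume "x \<in> {0..}" "y \<in> {0..}" "x \<le> y"
  then show "ln (1 + x) - c \<le> ln (1 + y) - c" by simp
qed
theorem lemma1:
  fixes a :: "complex^'n" and h :: complex and \<sigma>2 \<epsilon> L :: real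
  assumes "\<sigma>2 > 0" and "\<epsilon> > 0" and "L > 0"
  shows "(\<forall>W. hermitian_psd W \<longrightarrow>
           (let t = Re (trace (blockA a h ** W)) in
              (ln (1 + t / \<sigma>2) - t / (t + \<sigma>2) \<le> 2 * \<epsilon>^2 / L)
              \<longleftrightarrow>
              ((1 + t / \<sigma>2) * ln (1 + t / \<sigma>2) - (1 + 2 * \<epsilon>^2 / L) * (t / \<sigma>2)
                 \<le> 2 * \<epsilon>^2 / L)))
       \<and> convex_on {W. hermitian_psd W}
           (\<lambda>W. let t = Re (trace (blockA a h ** W)) in
              (1 + t / \<sigma>2) * ln (1 + t / \<sigma>2) - (1 + 2 * \<epsilon>^2 / L) * (t / \<sigma>2))"
proof
  define c where "c = 2 * \<epsilon>^2 / L"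
  define T where "T = (\<lambda>W. Re (trace (blockA a h ** W)))"
  define g where "g = (\<lambda>x::real. (1 + x) * ln (1 + x) - (1 + c) * x)"
  have eqv: "(ln (1 + x) - x / (1 + x) \<le> c) \<longleftrightarrow> ((1 + x) * ln (1 + x) - (1 + c) * x \<le> c)"
    if "x \<ge> 0" for x :: real
  proof -
    have p: "1 + x > 0" using that by simp
    have "(ln (1 + x) - x / (1 + x) \<le> c) \<longleftrightarrow> (1 + x) * (ln (1 + x) - x / (1 + x)) \<le> (1 + x) * c"
      using p by simp
    also have "(1 + x) * (ln (1 + x) - x / (1 + x)) = (1 + x) * ln (1 + x) - x"
      using p by (simp add: field_simps)
    finally show ?thesis by (simp add: algebra_simps)
  qed
  show "\<forall>W. hermitian_psd W \<longrightarrow>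
           (let t = Re (trace (blockA a h ** W)) in
              (ln (1 + t / \<sigma>2) - t / (t + \<sigma>2) \<le> 2 * \<epsilon>^2 / L)
              \<longleftrightarrow>
              ((1 + t / \<sigma>2) * ln (1 + t / \<sigma>2) - (1 + 2 * \<epsilon>^2 / L) * (t / \<sigma>2)
                 \<le> 2 * \<epsilon>^2 / L))"
  proof (intro allI impI)
    fix W :: "complex^('n+unit)^('n+unit)"
    assume "hermitian_psd W"
    then have t0: "0 \<le> T W" unfolding T_def by (rule t_nonneg)
    have x0: "0 \<le> T W / \<sigma>2" using t0 assms(1) by simp
    have r: "T W / (T W + \<sigma>2) = (T W / \<sigma>2) / (1 + T W / \<sigma>2)"
      using assms(1) t0 by (simp add: field_simps)
    have TW: "Re (trace (blockA a h ** W)) = T W" by (simp add: T_def)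
    show "let t = Re (trace (blockA a h ** W)) in
              (ln (1 + t / \<sigma>2) - t / (t + \<sigma>2) \<le> 2 * \<epsilon>^2 / L)
              \<longleftrightarrow>
              ((1 + t / \<sigma>2) * ln (1 + t / \<sigma>2) - (1 + 2 * \<epsilon>^2 / L) * (t / \<sigma>2)
                 \<le> 2 * \<epsilon>^2 / L)"
      unfolding Let_def TW r by (rule eqv[OF x0, unfolded c_def])
  qed
  have gc: "convex_on {0..} g" unfolding g_def by (rule gconv)
  show "convex_on {W. hermitian_psd W}
           (\<lambda>W. let t = Re (trace (blockA a h ** W)) in
              (1 + t / \<sigma>2) * ln (1 + t / \<sigma>2) - (1 + 2 * \<epsilon>^2 / L) * (t / \<sigma>2))"
  proof -
    have f: "(\<lambda>W. let t = Re (trace (blockA a h ** W)) in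
              (1 + t / \<sigma>2) * ln (1 + t / \<sigma>2) - (1 + 2 * \<epsilon>^2 / L) * (t / \<sigma>2))
          = (\<lambda>W. g (T W / \<sigma>2))"
      by (simp add: g_def T_def c_def Let_def)
    have "convex_on {W. hermitian_psd W} (\<lambda>W. g (T W / \<sigma>2))"
      unfolding convex_on_def
    proof (intro conjI psd_convex ballI allI impI)
      fix X Y :: "complex^('n+unit)^('n+unit)" and u v :: real
      assume X: "X \<in> {W. hermitian_psd W}" and Y: "Y \<in> {W. hermitian_psd W}"
        and uv: "0 \<le> u" "0 \<le> v" "u + v = 1"
      have xX: "T X / \<sigma>2 \<in> {0..}" using t_nonneg[of X a h] X assms(1) by (simp add: T_def)
      have xY: "T Y / \<sigma>2 \<in> {0..}" using t_nonneg[of Y a h] Y assms(1) by (simp add: T_def)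
      have "T (u *\<^sub>R X + v *\<^sub>R Y) / \<sigma>2 = u * (T X / \<sigma>2) + v * (T Y / \<sigma>2)"
        unfolding T_def tlin by (simp only: add_divide_distrib times_divide_eq_right)
      moreover have "g (u * (T X / \<sigma>2) + v * (T Y / \<sigma>2)) \<le> u * g (T X / \<sigma>2) + v * g (T Y / \<sigma>2)"
      proof -
        have "\<forall>x\<in>{0..}. \<forall>y\<in>{0..}. \<forall>u\<ge>0. \<forall>v\<ge>0. u + v = 1 \<longrightarrow> g (u * x + v * y) \<le> u * g x + v * g y"
          using gc unfolding convex_on_def by simp
        then show ?thesis using xX xY uv by blast
      qed
      ultimately show "g (T (u *\<^sub>R X + v *\<^sub>R Y) / \<sigma>2) \<le> u * g (T X / \<sigma>2) + v * g (T Y / \<sigma>2)"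
        by simp
    qed
    then show ?thesis unfolding f .
  qed
qed

end
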